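(* Let $a,b,c,d\in\mathbb{Q}$ satisfy $a^4+b^4+c^4+d^4=(a+b+c+d)^4$, with at least three of $a,b,c,d$ non-zero, and let $t=\frac{c^2+cd+d^2}{(a+c+d)(b+c+d)}$. Then $t\neq 1$ and $$\frac{t+1}{t-1}=\frac{a^2+ab+b^2}{(c+a+b)(d+a+b)}.$$
   Context: A solution of $a^4+b^4+c^4+d^4=(a+b+c+d)^4$ is called non-trivial if at least three of $a,b,c,d$ are non-zero. For a non-trivial solution the denominators $(a+c+d)(b+c+d)$ and $(c+a+b)(d+a+b)$ are non-zero. *)

theory Defs
  imports Complex_Main
begin

end

theory Submission
  imports Defs
begin

lemma three_zero:
  fixes x y z :: rat
  assumes "x^4 + y^4 + z^4 = 0"
  shows "x = 0 \<and> y = 0 \<and> z = 0"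
proof -
  have "x^4 \<ge> 0" "y^4 \<ge> 0" "z^4 \<ge> 0" by (simp_all add: zero_le_even_power)
  then have "x^4 = 0" "y^4 = 0" "z^4 = 0" using assms by linarith+
  then show ?thesis by simp
qed

theorem mainTheorem2:
  fixes a b c d t :: rat
  assumes eq: "a^4 + b^4 + c^4 + d^4 = (a + b + c + d)^4"
    and nontriv: "length (filter (\<lambda>x. x \<noteq> 0) [a, b, c, d]) \<ge> 3"
    and t_def: "t = (c^2 + c*d + d^2) / ((a + c + d) * (b + c + d))"
  shows "t \<noteq> 1 \<and> (t + 1) / (t - 1) = (a^2 + a*b + b^2) / ((c + a + b) * (d + a + b))"
proof -
  have nt: "\<not> (a = 0 \<and> c = 0 \<and> d = 0)" "\<not> (b = 0 \<and> c = 0 \<and> d = 0)"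
    "\<not> (c = 0 \<and> a = 0 \<and> b = 0)" "\<not> (d = 0 \<and> a = 0 \<and> b = 0)"
    using nontriv by (auto split: if_splits)
  have h1: "a + c + d \<noteq> 0"
  proof
    assume "a + c + d = 0"
    then have s: "a + b + c + d = b" by simp
    have "a^4 + b^4 + c^4 + d^4 = b^4" using eq by (simp only: s)
    then have "a^4 + c^4 + d^4 = 0" by simp
    then show False using three_zero nt(1) by blast
  qed
  have h2: "b + c + d \<noteq> 0"
  proof
    assume "b + c + d = 0"
    then have s: "a + b + c + d = a" by simp
    have "a^4 + b^4 + c^4 + d^4 = a^4" using eq by (simp only: s)
    then have "b^4 + c^4 + d^4 = 0" by simp
    then show False using three_zero nt(2) by blast
  qed
  have h3: "c + a + b \<noteq> 0"
  proof
    assume "c + a + b = 0"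
    then have s: "a + b + c + d = d" by simp
    have "a^4 + b^4 + c^4 + d^4 = d^4" using eq by (simp only: s)
    then have "c^4 + a^4 + b^4 = 0" by simp
    then show False using three_zero nt(3) by blast
  qed
  have h4: "d + a + b \<noteq> 0"
  proof
    assume "d + a + b = 0"
    then have s: "a + b + c + d = c" by simp
    have "a^4 + b^4 + c^4 + d^4 = c^4" using eq by (simp only: s)
    then have "d^4 + a^4 + b^4 = 0" by simp
    then show False using three_zero nt(4) by blast
  qed
  have e2: "a*b + a*c + a*d + b*c + b*d + c*d \<noteq> 0"
  proof
    assume z: "a*b + a*c + a*d + b*c + b*d + c*d = 0"
    have "(a+b+c+d)^2 = a^2+b^2+c^2+d^2 + 2*(a*b + a*c + a*d + b*c + b*d + c*d)"
      by algebra
    then have s2: "(a+b+c+d)^2 = a^2+b^2+c^2+d^2" using z by simp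
    have "(a+b+c+d)^4 = ((a+b+c+d)^2)^2" by algebra
    also have "\<dots> = (a^2+b^2+c^2+d^2)^2" using s2 by simp
    finally have "(a^2*b^2+a^2*c^2+a^2*d^2+b^2*c^2+b^2*d^2+c^2*d^2) = 0"
      using eq by algebra
    moreover have "a^2*b^2 \<ge> 0" "a^2*c^2 \<ge> 0" "a^2*d^2 \<ge> 0" "b^2*c^2 \<ge> 0"
      "b^2*d^2 \<ge> 0" "c^2*d^2 \<ge> 0" by simp_all
    ultimately have "a^2*b^2 = 0" "a^2*c^2 = 0" "a^2*d^2 = 0" "b^2*c^2 = 0"
      "b^2*d^2 = 0" "c^2*d^2 = 0" by linarith+
    then show False using nt by auto
  qed
  have t1: "t - 1 = - (a*b + a*c + a*d + b*c + b*d + c*d) / ((a + c + d) * (b + c + d))"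
  proof -
    have hD: "(a + c + d) * (b + c + d) \<noteq> 0" using h1 h2 by simp
    have "t - 1 = ((c^2 + c*d + d^2) - (a + c + d) * (b + c + d)) / ((a + c + d) * (b + c + d))"
      using hD by (simp add: t_def diff_divide_distrib)
    moreover have "(c^2 + c*d + d^2) - (a + c + d) * (b + c + d) = - (a*b + a*c + a*d + b*c + b*d + c*d)"
      by algebra
    ultimately show ?thesis by simp
  qed
  have tp: "t + 1 = (2*(c+d)^2 + (a+b)*(c+d) + a*b - c*d) / ((a + c + d) * (b + c + d))"
  proof -
    have hD: "(a + c + d) * (b + c + d) \<noteq> 0" using h1 h2 by simp
    have "t + 1 = ((c^2 + c*d + d^2) + (a + c + d) * (b + c + d)) / ((a + c + d) * (b + c + d))"
      using hD by (simp add: t_def add_divide_distrib)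
    moreover have "(c^2 + c*d + d^2) + (a + c + d) * (b + c + d) = 2*(c+d)^2 + (a+b)*(c+d) + a*b - c*d"
      by algebra
    ultimately show ?thesis by simp
  qed
  have key: "(2*(c+d)^2 + (a+b)*(c+d) + a*b - c*d) * ((c + a + b) * (d + a + b))
     = - (a*b + a*c + a*d + b*c + b*d + c*d) * (a^2 + a*b + b^2)"
    using eq by algebra
  have tne: "t \<noteq> 1" using t1 e2 h1 h2 by auto
  have "(t + 1) / (t - 1) = (2*(c+d)^2 + (a+b)*(c+d) + a*b - c*d) / (- (a*b + a*c + a*d + b*c + b*d + c*d))"
    using t1 tp h1 h2 e2 by simp
  also have "\<dots> = (a^2 + a*b + b^2) / ((c + a + b) * (d + a + b))"
  proof -
    have n1: "- (a*b + a*c + a*d + b*c + b*d + c*d) \<noteq> 0" using e2 by simp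
    have n2: "(c + a + b) * (d + a + b) \<noteq> 0" using h3 h4 by simp
    show ?thesis unfolding frac_eq_eq[OF n1 n2] using key by algebra
  qed
  finally show ?thesis using tne by simp
qed

end
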